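(* Assume the Morris–Sinclair mixing bound: for every $\alpha>0$ there is a constant $C_\alpha$ such that for all $n$, $\vec a$, $b$, the chain $P_{\rm Kna}$ satisfies $\tau(1/4)\le C_\alpha n^{9/2+\alpha}$. Then for every $\alpha>0$ there is a constant $C'_\alpha$ such that, for the SRT router model and for the billiard router model corresponding to $P_{\rm Kna}$ (for any $n,\vec a,b$ and any initial configuration), $\left|\chi^{(T)}_w-\mu^{(T)}_w\right|\le C'_\alpha n^{11/2+\alpha}$ for all $w\in\Omega_{\rm Kna}$ and $T\ge0$.
   Context: Given $\vec a\in\mathbb{Z}_{>0}^n$ and $b\in\mathbb{Z}_{>0}$, $\Omega_{\rm Kna}=\{\vec x\in\{0,1\}^n:\sum_i a_ix_i\le b\}$, $\mathcal N_{\rm Kna}(\vec x)=\{\vec y\in\Omega_{\rm Kna}:\|\vec x-\vec y\|_1=1\}$, and $P_{\rm Kna}(\vec x,\vec y)=1/(2n)$ if $\vec y\in\mathcal N_{\rm Kna}(\vec x)$, $1-|\mathcal N_{\rm Kna}(\vec x)|/(2n)$ if $\vec y=\vec x$, and $0$ otherwise; it is symmetric, ergodic, with uniform stationary distribution. For a stochastic matrix $P$ on a finite set $V$ with stationary distribution $\pi$: $\mathcal N(v)=\{u:P_{v,u}>0\}$; $d_{TV}(\xi,\zeta)=\frac12\|\xi-\zeta\|_1$; $\tau(\varepsilon)=\max_v\min\{t\ge0:d_{TV}(P^t_{v,\cdot},\pi)\le\varepsilon\}$. A functional-router model consists of $\sigma_v:\mathbb{Z}_{\ge0}\to\mathcal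 N(v)$; $I_{v,u}[z,z')=|\{j\in\{z,\dots,z'-1\}:\sigma_v(j)=u\}|$; given $\chi^{(0)}\in\mathbb{Z}_{\ge0}^V$, $Z^{(t)}_{v,u}=I_{v,u}\big[\sum_{s<t}\chi^{(s)}_v,\sum_{s\le t}\chi^{(s)}_v\big)$, $\chi^{(t+1)}_u=\sum_vZ^{(t)}_{v,u}$, $\mu^{(t)}=\chi^{(0)}P^t$. SRT router: with $T_i(v)=\{u\in\mathcal N(v):I_{v,u}[0,i)-(i+1)P_{v,u}<0\}$, $\sigma_v(i)$ is some $u\in T_i(v)$ minimizing $(I_{v,u}[0,i)+1)/P_{v,u}$. Billiard router: $\sigma_v(i)$ is some $u\in\mathcal N(v)$ minimizing $(I_{v,u}[0,i)+1)/P_{v,u}$. (Known: for the SRT router $|I_{v,u}[0,z)-zP_{v,u}|<1$ for all $z>0$; for the billiard router $|I_{v,u}[z,z')-(z'-z)P_{v,u}|\le1+(|\mathcal N(v)|-2)P_{v,u}$ for $z'>z$.) *)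

theory Defs
  imports Complex_Main
begin

definition nbr :: "'v set \<Rightarrow> ('v \<Rightarrow> 'v \<Rightarrow> real) \<Rightarrow> 'v \<Rightarrow> 'v set" where
  "nbr V P v = {u \<in> V. P v u > 0}"

fun mpow :: "'v set \<Rightarrow> ('v \<Rightarrow> 'v \<Rightarrow> real) \<Rightarrow> nat \<Rightarrow> 'v \<Rightarrow> 'v \<Rightarrow> real" where
  "mpow V P 0 v u = (if u = v then 1 else 0)"
| "mpow V P (Suc t) v u = (\<Sum>w\<in>V. mpow V P t v w * P w u)"

definition dtv :: "'v set \<Rightarrow> ('v \<Rightarrow> real) \<Rightarrow> ('v \<Rightarrow> real) \<Rightarrow> real" where
  "dtv V \<xi> \<zeta> = (1/2) * (\<Sum>v\<in>V. \<bar>\<xi> v - \<zeta> v\<bar>)"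

definition mixing_time :: "'v set \<Rightarrow> ('v \<Rightarrow> 'v \<Rightarrow> real) \<Rightarrow> ('v \<Rightarrow> real) \<Rightarrow> real \<Rightarrow> nat" where
  "mixing_time V P \<pi> \<epsilon> = Max ((\<lambda>v. LEAST t. dtv V (mpow V P t v) \<pi> \<le> \<epsilon>) ` V)"

definition Icount :: "('v \<Rightarrow> nat \<Rightarrow> 'v) \<Rightarrow> 'v \<Rightarrow> 'v \<Rightarrow> nat \<Rightarrow> nat \<Rightarrow> nat" where
  "Icount \<sigma> v u z z' = card {j \<in> {z..<z'}. \<sigma> v j = u}"

text \<open>router_state t = (chi^(t), S^(t)) where S^(t)_v = sum_{s<t} chi^(s)_v.\<close>
fun router_state :: "'v set \<Rightarrow> ('v \<Rightarrow> nat \<Rightarrow> 'v) \<Rightarrow> ('v \<Rightarrow> nat) \<Rightarrow> nat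
      \<Rightarrow> ('v \<Rightarrow> nat) \<times> ('v \<Rightarrow> nat)" where
  "router_state V \<sigma> \<chi>0 0 = (\<chi>0, (\<lambda>_. 0))"
| "router_state V \<sigma> \<chi>0 (Suc t) =
     (let (c, S) = router_state V \<sigma> \<chi>0 t
      in ((\<lambda>u. \<Sum>v\<in>V. Icount \<sigma> v u (S v) (S v + c v)), (\<lambda>v. S v + c v)))"

definition chi :: "'v set \<Rightarrow> ('v \<Rightarrow> nat \<Rightarrow> 'v) \<Rightarrow> ('v \<Rightarrow> nat) \<Rightarrow> nat \<Rightarrow> 'v \<Rightarrow> nat" where
  "chi V \<sigma> \<chi>0 t = fst (router_state V \<sigma> \<chi>0 t)"

definition mu :: "'v set \<Rightarrow> ('v \<Rightarrow> 'v \<Rightarrow> real) \<Rightarrow> ('v \<Rightarrow> nat) \<Rightarrow> nat \<Rightarrow> 'v \<Rightarrow> real" where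
  "mu V P \<chi>0 t w = (\<Sum>v\<in>V. real (\<chi>0 v) * mpow V P t v w)"

definition srt_T :: "'v set \<Rightarrow> ('v \<Rightarrow> 'v \<Rightarrow> real) \<Rightarrow> ('v \<Rightarrow> nat \<Rightarrow> 'v) \<Rightarrow> 'v \<Rightarrow> nat \<Rightarrow> 'v set" where
  "srt_T V P \<sigma> v i = {u \<in> nbr V P v. real (Icount \<sigma> v u 0 i) - real (i + 1) * P v u < 0}"

definition is_srt_router :: "'v set \<Rightarrow> ('v \<Rightarrow> 'v \<Rightarrow> real) \<Rightarrow> ('v \<Rightarrow> nat \<Rightarrow> 'v) \<Rightarrow> bool" where
  "is_srt_router V P \<sigma> \<longleftrightarrow>
     (\<forall>v\<in>V. \<forall>i. \<sigma> v i \<in> srt_T V P \<sigma> v i \<and>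
        (\<forall>u\<in>srt_T V P \<sigma> v i.
           (real (Icount \<sigma> v (\<sigma> v i) 0 i) + 1) / P v (\<sigma> v i)
             \<le> (real (Icount \<sigma> v u 0 i) + 1) / P v u))"

definition is_billiard_router :: "'v set \<Rightarrow> ('v \<Rightarrow> 'v \<Rightarrow> real) \<Rightarrow> ('v \<Rightarrow> nat \<Rightarrow> 'v) \<Rightarrow> bool" where
  "is_billiard_router V P \<sigma> \<longleftrightarrow>
     (\<forall>v\<in>V. \<forall>i. \<sigma> v i \<in> nbr V P v \<and>
        (\<forall>u\<in>nbr V P v.
           (real (Icount \<sigma> v (\<sigma> v i) 0 i) + 1) / P v (\<sigma> v i)
             \<le> (real (Icount \<sigma> v u 0 i) + 1) / P v u))"

text \<open>Vectors in {0,1}^n are lists of length n with entries in {0,1};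
  a is given by its entries a 0, ..., a (n-1).\<close>
definition kna_space :: "nat \<Rightarrow> (nat \<Rightarrow> nat) \<Rightarrow> nat \<Rightarrow> nat list set" where
  "kna_space n a b = {x. length x = n \<and> set x \<subseteq> {0, 1} \<and> (\<Sum>i<n. a i * x ! i) \<le> b}"

definition kna_nbr :: "nat \<Rightarrow> (nat \<Rightarrow> nat) \<Rightarrow> nat \<Rightarrow> nat list \<Rightarrow> nat list set" where
  "kna_nbr n a b x = {y \<in> kna_space n a b. (\<Sum>i<n. \<bar>real (x ! i) - real (y ! i)\<bar>) = 1}"

definition P_kna :: "nat \<Rightarrow> (nat \<Rightarrow> nat) \<Rightarrow> nat \<Rightarrow> nat list \<Rightarrow> nat list \<Rightarrow> real" where
  "P_kna n a b x y =
     (if y \<in> kna_nbr n a b x then 1 / (2 * real n)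
      else if y = x then 1 - real (card (kna_nbr n a b x)) / (2 * real n)
      else 0)"

end

theory Submission
  imports Defs
begin


lemma mpow_Suc_left:
  assumes "finite V" "v \<in> V" "u \<in> V"
  shows "mpow V P (Suc t) v u = (\<Sum>w\<in>V. P v w * mpow V P t w u)"
  using assms
proof (induction t arbitrary: u)
  case 0
  have "(\<Sum>w\<in>V. P v w * mpow V P 0 w u) = (\<Sum>w\<in>V. if w = u then P v u else 0)"
    by (rule sum.cong) auto
  also have "\<dots> = P v u" using 0 by (simp add: sum.delta')
  finally have r: "(\<Sum>w\<in>V. P v w * mpow V P 0 w u) = P v u" .
  have "(\<Sum>w\<in>V. mpow V P 0 v w * P w u) = (\<Sum>w\<in>V. if w = v then P v u else 0)"
    by (rule sum.cong) auto
  also have "\<dots> = P v u" using 0 by (simp add: sum.delta')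
  finally show ?case using r by simp
next
  case (Suc t)
  have "mpow V P (Suc (Suc t)) v u = (\<Sum>w\<in>V. mpow V P (Suc t) v w * P w u)" by simp
  also have "\<dots> = (\<Sum>w\<in>V. (\<Sum>x\<in>V. P v x * mpow V P t x w) * P w u)"
    using Suc by (intro sum.cong) auto
  also have "\<dots> = (\<Sum>x\<in>V. P v x * (\<Sum>w\<in>V. mpow V P t x w * P w u))"
    by (simp add: sum_distrib_left sum_distrib_right mult.assoc) (rule sum.swap)
  also have "\<dots> = (\<Sum>x\<in>V. P v x * mpow V P (Suc t) x u)" by simp
  finally show ?case .
qed

locale chain =
  fixes V :: "'v set" and P :: "'v \<Rightarrow> 'v \<Rightarrow> real"
  assumes fin: "finite V"
    and nonneg: "\<And>v u. v \<in> V \<Longrightarrow> u \<in> V \<Longrightarrow> P v u \<ge> 0"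
    and stoch: "\<And>v. v \<in> V \<Longrightarrow> (\<Sum>u\<in>V. P v u) = 1"
    and symm: "\<And>v u. v \<in> V \<Longrightarrow> u \<in> V \<Longrightarrow> P v u = P u v"
begin

abbreviation Q where "Q \<equiv> mpow V P"

lemma Q_nonneg: "v \<in> V \<Longrightarrow> u \<in> V \<Longrightarrow> Q t v u \<ge> 0"
  by (induction t arbitrary: u) (auto intro!: sum_nonneg mult_nonneg_nonneg nonneg)

lemma Q_stoch: "v \<in> V \<Longrightarrow> (\<Sum>u\<in>V. Q t v u) = 1"
proof (induction t)
  case 0 thus ?case using fin by (simp add: sum.delta')
next
  case (Suc t)
  have "(\<Sum>u\<in>V. Q (Suc t) v u) = (\<Sum>w\<in>V. Q t v w * (\<Sum>u\<in>V. P w u))"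
    by (simp add: sum_distrib_left) (rule sum.swap)
  also have "\<dots> = (\<Sum>w\<in>V. Q t v w)" by (intro sum.cong) (auto simp: stoch)
  finally show ?case using Suc by simp
qed

lemma Q_symm: "v \<in> V \<Longrightarrow> u \<in> V \<Longrightarrow> Q t v u = Q t u v"
proof (induction t arbitrary: v u)
  case 0 thus ?case by auto
next
  case (Suc t)
  have "Q (Suc t) v u = (\<Sum>w\<in>V. Q t v w * P w u)" by simp
  also have "\<dots> = (\<Sum>w\<in>V. P u w * Q t w v)"
    using Suc by (intro sum.cong) (auto simp: symm mult.commute)
  also have "\<dots> = Q (Suc t) u v" using mpow_Suc_left[of V u v P t] Suc fin by simp
  finally show ?case .
qed

lemma Q_col: "u \<in> V \<Longrightarrow> (\<Sum>v\<in>V. Q t v u) = 1"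
  using Q_stoch[of u t] by (simp add: Q_symm cong: sum.cong)

lemma P_col: "u \<in> V \<Longrightarrow> (\<Sum>v\<in>V. P v u) = 1"
  using stoch[of u] by (simp add: symm cong: sum.cong)

lemma Q_add: "x \<in> V \<Longrightarrow> u \<in> V \<Longrightarrow> Q (a + b) x u = (\<Sum>y\<in>V. Q a x y * Q b y u)"
proof (induction b arbitrary: u)
  case 0
  have "(\<Sum>y\<in>V. Q a x y * Q 0 y u) = (\<Sum>y\<in>V. if y = u then Q a x u else 0)"
    by (rule sum.cong) auto
  thus ?case using 0 fin by (simp add: sum.delta')
next
  case (Suc b)
  have "Q (a + Suc b) x u = (\<Sum>w\<in>V. Q (a+b) x w * P w u)" by simp
  also have "\<dots> = (\<Sum>w\<in>V. (\<Sum>y\<in>V. Q a x y * Q b y w) * P w u)"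
    using Suc by (intro sum.cong) auto
  also have "\<dots> = (\<Sum>y\<in>V. Q a x y * (\<Sum>w\<in>V. Q b y w * P w u))"
    by (simp add: sum_distrib_left sum_distrib_right mult.assoc) (rule sum.swap)
  finally show ?case by simp
qed

end


definition l1 :: "'v set \<Rightarrow> ('v \<Rightarrow> real) \<Rightarrow> real" where
  "l1 V f = (\<Sum>v\<in>V. \<bar>f v\<bar>)"

lemma l1_contract:
  assumes fin: "finite V" and nn: "\<And>v u. v \<in> V \<Longrightarrow> u \<in> V \<Longrightarrow> M v u \<ge> 0"
    and st: "\<And>v. v \<in> V \<Longrightarrow> (\<Sum>u\<in>V. M v u) = 1"
  shows "l1 V (\<lambda>u. \<Sum>v\<in>V. f v * M v u) \<le> l1 V f"
proof -
  have "l1 V (\<lambda>u. \<Sum>v\<in>V. f v * M v u) \<le> (\<Sum>u\<in>V. \<Sum>v\<in>V. \<bar>f v\<bar> * M v u)"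
    unfolding l1_def
    by (intro sum_mono order.trans[OF sum_abs]) (simp add: abs_mult nn)
  also have "\<dots> = (\<Sum>v\<in>V. \<bar>f v\<bar> * (\<Sum>u\<in>V. M v u))"
    by (subst sum.swap) (simp add: sum_distrib_left)
  also have "\<dots> = l1 V f" unfolding l1_def by (intro sum.cong) (auto simp: st)
  finally show ?thesis .
qed

lemma l1_coupling:
  assumes fin: "finite V" and sf: "(\<Sum>v\<in>V. f v) = 0"
    and nn: "\<And>v u. v \<in> V \<Longrightarrow> u \<in> V \<Longrightarrow> M v u \<ge> 0"
    and cp: "\<And>x y. x \<in> V \<Longrightarrow> y \<in> V \<Longrightarrow> (\<Sum>u\<in>V. \<bar>M x u - M y u\<bar>) \<le> c2"
  shows "l1 V (\<lambda>u. \<Sum>v\<in>V. f v * M v u) \<le> c2 / 2 * l1 V f"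
proof -
  define p where "p x = max (f x) 0" for x
  define q where "q x = max (- f x) 0" for x
  have fpq: "f x = p x - q x" for x unfolding p_def q_def by auto
  have pn: "p x \<ge> 0" "q x \<ge> 0" for x unfolding p_def q_def by auto
  define m where "m = (\<Sum>x\<in>V. p x)"
  have mq: "(\<Sum>x\<in>V. q x) = m"
    using sf unfolding m_def by (simp add: fpq sum_subtractf)
  have l1f: "l1 V f = 2 * m"
  proof -
    have "l1 V f = (\<Sum>x\<in>V. p x + q x)" unfolding l1_def p_def q_def
      by (intro sum.cong) auto
    thus ?thesis using mq by (simp add: sum.distrib m_def)
  qed
  have m0: "m \<ge> 0" unfolding m_def using pn by (simp add: sum_nonneg)
  show ?thesis
  proof (cases "m = 0")
    case True
    have "\<forall>x\<in>V. p x = 0" using True fin pn unfolding m_def by (simp add: sum_nonneg_eq_0_iff)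
    moreover have "\<forall>x\<in>V. q x = 0" using True mq fin pn by (simp add: sum_nonneg_eq_0_iff)
    ultimately have "\<forall>x\<in>V. f x = 0" using fpq by auto
    hence "l1 V (\<lambda>u. \<Sum>v\<in>V. f v * M v u) = 0" unfolding l1_def by simp
    thus ?thesis using l1f True by simp
  next
    case False
    hence mpos: "m > 0" using m0 by simp
    have key: "(\<Sum>v\<in>V. f v * M v u) = (1/m) * (\<Sum>x\<in>V. \<Sum>y\<in>V. p x * q y * (M x u - M y u))" for u
    proof -
      have "(\<Sum>x\<in>V. \<Sum>y\<in>V. p x * q y * (M x u - M y u))
          = (\<Sum>x\<in>V. \<Sum>y\<in>V. q y * (p x * M x u)) - (\<Sum>x\<in>V. \<Sum>y\<in>V. p x * (q y * M y u))"
        by (simp add: sum_subtractf[symmetric] algebra_simps)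
      also have "\<dots> = m * (\<Sum>x\<in>V. p x * M x u) - m * (\<Sum>y\<in>V. q y * M y u)"
        by (simp add: sum_distrib_right[symmetric] sum_distrib_left[symmetric] mq m_def mult.commute)
      also have "\<dots> = m * (\<Sum>v\<in>V. f v * M v u)"
        by (simp add: fpq left_diff_distrib sum_subtractf right_diff_distrib)
      finally show ?thesis using mpos by simp
    qed
    have "l1 V (\<lambda>u. \<Sum>v\<in>V. f v * M v u)
        \<le> (\<Sum>u\<in>V. (1/m) * (\<Sum>x\<in>V. \<Sum>y\<in>V. p x * q y * \<bar>M x u - M y u\<bar>))"
    proof -
      have "\<bar>\<Sum>x\<in>V. \<Sum>y\<in>V. p x * q y * (M x u - M y u)\<bar>
          \<le> (\<Sum>x\<in>V. \<Sum>y\<in>V. p x * q y * \<bar>M x u - M y u\<bar>)" for u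
      proof -
        have "\<bar>\<Sum>x\<in>V. \<Sum>y\<in>V. p x * q y * (M x u - M y u)\<bar>
            \<le> (\<Sum>x\<in>V. \<bar>\<Sum>y\<in>V. p x * q y * (M x u - M y u)\<bar>)" by (rule sum_abs)
        also have "\<dots> \<le> (\<Sum>x\<in>V. \<Sum>y\<in>V. \<bar>p x * q y * (M x u - M y u)\<bar>)"
          by (intro sum_mono sum_abs)
        also have "\<dots> = (\<Sum>x\<in>V. \<Sum>y\<in>V. p x * q y * \<bar>M x u - M y u\<bar>)"
          using pn by (simp add: abs_mult)
        finally show ?thesis .
      qed
      thus ?thesis unfolding l1_def key using mpos
        by (intro sum_mono) (simp add: abs_mult divide_right_mono)
    qed
    also have "\<dots> = (1/m) * (\<Sum>x\<in>V. \<Sum>y\<in>V. p x * q y * (\<Sum>u\<in>V. \<bar>M x u - M y u\<bar>))"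
    proof -
      have "(\<Sum>u\<in>V. \<Sum>x\<in>V. \<Sum>y\<in>V. p x * q y * \<bar>M x u - M y u\<bar>)
          = (\<Sum>x\<in>V. \<Sum>u\<in>V. \<Sum>y\<in>V. p x * q y * \<bar>M x u - M y u\<bar>)"
        by (rule sum.swap)
      also have "\<dots> = (\<Sum>x\<in>V. \<Sum>y\<in>V. \<Sum>u\<in>V. p x * q y * \<bar>M x u - M y u\<bar>)"
        by (intro sum.cong refl sum.swap)
      also have "\<dots> = (\<Sum>x\<in>V. \<Sum>y\<in>V. p x * q y * (\<Sum>u\<in>V. \<bar>M x u - M y u\<bar>))"
        by (simp add: sum_distrib_left)
      finally show ?thesis by (simp add: sum_divide_distrib[symmetric])
    qed
    also have "\<dots> \<le> (1/m) * (\<Sum>x\<in>V. \<Sum>y\<in>V. p x * q y * c2)"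
      using mpos pn cp by (intro mult_left_mono sum_mono mult_left_mono) (auto)
    also have "\<dots> = (1/m) * (m * m * c2)"
      by (simp add: sum_distrib_right[symmetric] sum_distrib_left[symmetric] mq m_def mult.commute mult.left_commute)
    also have "\<dots> = c2 / 2 * l1 V f" using mpos l1f by simp
    finally show ?thesis .
  qed
qed


context chain begin

definition pi0 where "pi0 = 1 / real (card V)"
definition e where "e x k = l1 V (\<lambda>u. Q k x u - pi0)"

lemma V_ne: "x \<in> V \<Longrightarrow> card V > 0" using fin by (auto simp: card_gt_0_iff)

lemma sum_pi0: "x \<in> V \<Longrightarrow> (\<Sum>u\<in>V. pi0) = 1"
  using V_ne by (simp add: pi0_def)

lemma e_Suc_le: assumes x: "x \<in> V" shows "e x (Suc k) \<le> e x k"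
proof -
  have eq: "Q (Suc k) x u - pi0 = (\<Sum>w\<in>V. (Q k x w - pi0) * P w u)" if "u \<in> V" for u
  proof -
    have "(\<Sum>w\<in>V. (Q k x w - pi0) * P w u) = Q (Suc k) x u - pi0 * (\<Sum>w\<in>V. P w u)"
      by (simp add: left_diff_distrib sum_subtractf sum_distrib_left)
    thus ?thesis using P_col[OF that] by simp
  qed
  have "e x (Suc k) = l1 V (\<lambda>u. \<Sum>w\<in>V. (Q k x w - pi0) * P w u)"
    unfolding e_def l1_def by (rule sum.cong[OF refl]) (simp only: eq)
  also have "\<dots> \<le> e x k" unfolding e_def
    by (rule l1_contract[OF fin nonneg stoch])
  finally show ?thesis .
qed

lemma e_mono: assumes x: "x \<in> V" "k \<le> k'" shows "e x k' \<le> e x k"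
  using assms(2)
proof (induction k' rule: dec_induct)
  case (step n) thus ?case using e_Suc_le[OF x(1), of n] by simp
qed simp

lemma e0: assumes x: "x \<in> V" shows "e x 0 \<le> 2"
proof -
  have "e x 0 \<le> (\<Sum>u\<in>V. (if u = x then 1 else 0) + pi0)"
    unfolding e_def l1_def using V_ne[OF x]
    by (intro sum_mono) (auto simp: pi0_def)
  also have "\<dots> = 2" using x fin sum_pi0[OF x] by (simp add: sum.distrib)
  finally show ?thesis .
qed

lemma e_nonneg: "e x k \<ge> 0" unfolding e_def l1_def by (simp add: sum_nonneg)

lemma Q_diff: assumes "x \<in> V" "u \<in> V"
  shows "Q (k + m) x u - pi0 = (\<Sum>y\<in>V. (Q k x y - pi0) * Q m y u)"
proof -
  have "(\<Sum>y\<in>V. (Q k x y - pi0) * Q m y u) = Q (k+m) x u - pi0 * (\<Sum>y\<in>V. Q m y u)"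
    using Q_add[OF assms] by (simp add: left_diff_distrib sum_subtractf sum_distrib_left)
  thus ?thesis using Q_col[OF assms(2)] by simp
qed

lemma e_contract:
  assumes x: "x \<in> V" and cp: "\<And>y y'. y \<in> V \<Longrightarrow> y' \<in> V \<Longrightarrow> (\<Sum>u\<in>V. \<bar>Q m y u - Q m y' u\<bar>) \<le> c2"
  shows "e x (k + m) \<le> c2 / 2 * e x k"
proof -
  have "e x (k + m) = l1 V (\<lambda>u. \<Sum>y\<in>V. (Q k x y - pi0) * Q m y u)"
    unfolding e_def l1_def using x by (intro sum.cong) (auto simp: Q_diff)
  also have "\<dots> \<le> c2 / 2 * e x k" unfolding e_def
  proof (rule l1_coupling[OF fin _ Q_nonneg cp])
    show "(\<Sum>v\<in>V. Q k x v - pi0) = 0" using Q_stoch[OF x] sum_pi0[OF x] by (simp add: sum_subtractf)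
  qed auto
  finally show ?thesis .
qed

lemma e_half:
  assumes x: "x \<in> V" and h: "\<And>y. y \<in> V \<Longrightarrow> e y m \<le> 1/2"
  shows "e x (k + m) \<le> 1/2 * e x k"
proof -
  have "(\<Sum>u\<in>V. \<bar>Q m y u - Q m y' u\<bar>) \<le> 1" if "y \<in> V" "y' \<in> V" for y y'
  proof -
    have "(\<Sum>u\<in>V. \<bar>Q m y u - Q m y' u\<bar>) \<le> (\<Sum>u\<in>V. \<bar>Q m y u - pi0\<bar> + \<bar>Q m y' u - pi0\<bar>)"
      by (intro sum_mono) linarith
    also have "\<dots> = e y m + e y' m" unfolding e_def l1_def by (simp add: sum.distrib)
    finally show ?thesis using h[OF that(1)] h[OF that(2)] by simp
  qed
  from e_contract[OF x this] show ?thesis by simp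
qed

lemma e_geom:
  assumes x: "x \<in> V" and h: "\<And>y. y \<in> V \<Longrightarrow> e y m \<le> 1/2" and m: "m \<ge> 1"
  shows "e x k \<le> 2 * (1/2) ^ (k div m)"
proof (induction k rule: less_induct)
  case (less k)
  show ?case
  proof (cases "k < m")
    case True
    thus ?thesis using e_mono[OF x, of 0 k] e0[OF x] by simp
  next
    case False
    hence k: "k = (k - m) + m" by simp
    have "e x k \<le> 1/2 * e x (k - m)" using e_half[OF x h, of "k-m"] k by metis
    also have "\<dots> \<le> 1/2 * (2 * (1/2) ^ ((k - m) div m))"
      using less.IH[of "k-m"] m False by simp
    also have "(k - m) div m = k div m - 1" using m False by (simp add: le_div_geq)
    also have "1/2 * (2 * (1/2::real) ^ (k div m - 1)) = 2 * (1/2) ^ (k div m)"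
    proof -
      have "k div m \<ge> 1" using m False by (simp add: le_div_geq)
      then obtain j where "k div m = Suc j" by (cases "k div m") auto
      thus ?thesis by simp
    qed
    finally show ?thesis .
  qed
qed

lemma sum_div_geom:
  assumes m: "m \<ge> 1"
  shows "(\<Sum>k<N. (1/2::real) ^ (k div m)) \<le> 2 * real m"
proof -
  have eq: "(\<Sum>k<j*m. (1/2::real) ^ (k div m)) = real m * (\<Sum>i<j. (1/2) ^ i)" for j
  proof (induction j)
    case (Suc j)
    have "(\<Sum>k<Suc j*m. (1/2::real) ^ (k div m)) =
          (\<Sum>k<j*m. (1/2::real) ^ (k div m)) + (\<Sum>k\<in>{j*m..<j*m+m}. (1/2::real) ^ (k div m))"
      by (simp add: add.commute sum.atLeastLessThan_concat[symmetric] lessThan_atLeast0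
          flip: sum.atLeastLessThan_concat[of 0 "j*m" "j*m+m"])
    also have "(\<Sum>k\<in>{j*m..<j*m+m}. (1/2::real) ^ (k div m)) = (\<Sum>k\<in>{j*m..<j*m+m}. (1/2::real) ^ j)"
    proof (intro sum.cong refl)
      fix k assume "k \<in> {j*m..<j*m+m}"
      then obtain i where "k = j*m + i" "i < m" by (metis atLeastLessThan_iff le_Suc_ex nat_add_left_cancel_less)
      thus "(1/2::real) ^ (k div m) = (1/2) ^ j" using m by simp
    qed
    finally show ?case using Suc by (simp add: algebra_simps)
  qed simp
  have "(\<Sum>k<N. (1/2::real) ^ (k div m)) \<le> (\<Sum>k<N*m. (1/2::real) ^ (k div m))"
    using m by (intro sum_mono2) auto
  also have "\<dots> = real m * (\<Sum>i<N. (1/2) ^ i)" by (rule eq)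
  also have "(\<Sum>i<N. (1/2::real) ^ i) \<le> 2"
  proof -
    have "(\<Sum>i<N. (1/2::real) ^ i) = 2 * (1 - (1/2)^N)" by (induction N) auto
    thus ?thesis by simp
  qed
  hence "real m * (\<Sum>i<N. (1/2::real) ^ i) \<le> real m * 2" by (intro mult_left_mono) auto
  finally show ?thesis by simp
qed

lemma sum_e:
  assumes x: "x \<in> V" and h: "\<And>y. y \<in> V \<Longrightarrow> e y m \<le> 1/2" and m: "m \<ge> 1"
  shows "(\<Sum>k<N. e x k) \<le> 4 * real m"
proof -
  have "(\<Sum>k<N. e x k) \<le> (\<Sum>k<N. 2 * (1/2) ^ (k div m))"
    by (intro sum_mono e_geom[OF x h m])
  also have "\<dots> \<le> 2 * (2 * real m)" using sum_div_geom[OF m, of N] by (simp add: sum_distrib_left[symmetric])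
  finally show ?thesis by simp
qed

end


context chain begin

lemma l1_overlap:
  fixes a b :: "'v \<Rightarrow> real"
  assumes a: "\<And>u. u \<in> V \<Longrightarrow> a u \<ge> 0" "(\<Sum>u\<in>V. a u) = 1"
    and b: "\<And>u. u \<in> V \<Longrightarrow> b u \<ge> 0" "(\<Sum>u\<in>V. b u) = 1"
    and z: "z \<in> V" "a z \<ge> d" "b z \<ge> d"
  shows "(\<Sum>u\<in>V. \<bar>a u - b u\<bar>) \<le> 2 - 2 * d"
proof -
  have "(\<Sum>u\<in>V. \<bar>a u - b u\<bar>) = (\<Sum>u\<in>V. a u + b u - 2 * min (a u) (b u))"
    by (intro sum.cong) auto
  also have "\<dots> = 2 - 2 * (\<Sum>u\<in>V. min (a u) (b u))"
    using a b by (simp add: sum_subtractf sum.distrib sum_distrib_left)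
  also have "(\<Sum>u\<in>V. min (a u) (b u)) \<ge> min (a z) (b z)"
    using z a b fin by (intro member_le_sum) auto
  hence "2 - 2 * (\<Sum>u\<in>V. min (a u) (b u)) \<le> 2 - 2 * d" using z by linarith
  finally show ?thesis .
qed

lemma doeblin:
  assumes z: "z \<in> V" and d: "d > 0" and lb: "\<And>y. y \<in> V \<Longrightarrow> Q m y z \<ge> d" and x: "x \<in> V"
  shows "\<exists>t. e x t \<le> 1/2"
proof -
  have d1: "d \<le> 1"
  proof -
    have "Q m x z \<le> (\<Sum>u\<in>V. Q m x u)" using z fin by (intro member_le_sum Q_nonneg x) auto
    thus ?thesis using lb[OF x] Q_stoch[OF x] by simp
  qed
  have step: "e x (k + m) \<le> (1 - d) * e x k" for k
  proof -
    have "(\<Sum>u\<in>V. \<bar>Q m y u - Q m y' u\<bar>) \<le> 2 - 2 * d" if "y \<in> V" "y' \<in> V" for y y'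
      using that by (intro l1_overlap[of "Q m y" "Q m y'" z d] Q_nonneg Q_stoch z lb)
    from e_contract[OF x this, of k] show ?thesis by (simp add: algebra_simps)
  qed
  have geo: "e x (j * m) \<le> (1 - d) ^ j * 2" for j
  proof (induction j)
    case 0 thus ?case using e0[OF x] by simp
  next
    case (Suc j)
    have "e x (Suc j * m) \<le> (1 - d) * e x (j * m)" using step[of "j*m"] by (simp add: add.commute)
    also have "\<dots> \<le> (1 - d) * ((1 - d) ^ j * 2)" using Suc d1 by (intro mult_left_mono) auto
    finally show ?case by simp
  qed
  obtain j where j: "(1 - d) ^ j < 1/4" using real_arch_pow_inv[of "1/4" "1 - d"] d by auto
  have "e x (j * m) \<le> 1/2" using geo[of j] j by simp
  thus ?thesis by blast
qed

lemma dtv_e: "dtv V (Q t x) (\<lambda>_. pi0) = e x t / 2"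
  unfolding dtv_def e_def l1_def by simp

lemma mixing_e:
  assumes ex: "\<And>x. x \<in> V \<Longrightarrow> \<exists>t. e x t \<le> 1/2" and x: "x \<in> V"
  shows "e x (mixing_time V P (\<lambda>_. pi0) (1/4)) \<le> 1/2"
proof -
  let ?L = "\<lambda>v. LEAST t. dtv V (Q t v) (\<lambda>_. pi0) \<le> 1/4"
  have ex': "\<exists>t. dtv V (Q t x) (\<lambda>_. pi0) \<le> 1/4" using ex[OF x] by (auto simp add: dtv_e mult.commute)
  have l: "e x (?L x) \<le> 1/2" using LeastI_ex[OF ex'] by (simp add: dtv_e)
  have "?L x \<le> mixing_time V P (\<lambda>_. pi0) (1/4)"
    unfolding mixing_time_def using fin x by (intro Max_ge) auto
  from e_mono[OF x this] l show ?thesis by simp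
qed

end


lemma Icount_Suc: "a \<le> b \<Longrightarrow> Icount \<sigma> v u a (Suc b) = Icount \<sigma> v u a b + (if \<sigma> v b = u then 1 else 0)"
proof -
  assume ab: "a \<le> b"
  have "{j \<in> {a..<Suc b}. \<sigma> v j = u} = {j \<in> {a..<b}. \<sigma> v j = u} \<union> (if \<sigma> v b = u then {b} else {})"
    using ab by (auto simp: less_Suc_eq)
  thus ?thesis unfolding Icount_def by (auto simp: card_insert_if)
qed

lemma Icount_split: "a \<le> b \<Longrightarrow> Icount \<sigma> v u 0 b = Icount \<sigma> v u 0 a + Icount \<sigma> v u a b"
proof (induction b rule: dec_induct)
  case base thus ?case by (simp add: Icount_def)
next
  case (step n) thus ?case by (simp add: Icount_Suc)
qed

lemma Icount_mono: "a \<le> b \<Longrightarrow> Icount \<sigma> v u 0 a \<le> Icount \<sigma> v u 0 b"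
  using Icount_split[of a b \<sigma> v u] by simp

lemma Icount_sum:
  assumes "finite N" "\<And>j. \<sigma> v j \<in> N" "a \<le> b"
  shows "(\<Sum>u\<in>N. Icount \<sigma> v u a b) = b - a"
  using assms(3)
proof (induction b rule: dec_induct)
  case base thus ?case by (simp add: Icount_def)
next
  case (step n)
  have "(\<Sum>u\<in>N. Icount \<sigma> v u a (Suc n)) = (\<Sum>u\<in>N. Icount \<sigma> v u a n) + (\<Sum>u\<in>N. if \<sigma> v n = u then 1 else 0)"
    using step by (simp add: Icount_Suc sum.distrib)
  also have "(\<Sum>u\<in>N. if \<sigma> v n = u then 1 else 0) = (1::nat)" using assms(1,2) by (simp add: sum.delta)
  finally show ?case using step.IH step.hyps by (simp add: Suc_diff_le)
qed

locale row =
  fixes V :: "'v set" and P :: "'v \<Rightarrow> 'v \<Rightarrow> real" and \<sigma> :: "'v \<Rightarrow> nat \<Rightarrow> 'v" and v :: 'v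
  assumes fin: "finite V" and vV: "v \<in> V"
    and nonneg: "\<And>u. u \<in> V \<Longrightarrow> P v u \<ge> 0"
    and stoch: "(\<Sum>u\<in>V. P v u) = 1"
    and inN: "\<And>i. \<sigma> v i \<in> nbr V P v"
begin

abbreviation N where "N \<equiv> nbr V P v"
abbreviation c where "c u i \<equiv> real (Icount \<sigma> v u 0 i)"

lemma finN: "finite N" using fin unfolding nbr_def by auto
lemma NV: "N \<subseteq> V" unfolding nbr_def by auto
lemma Npos: "u \<in> N \<Longrightarrow> P v u > 0" unfolding nbr_def by auto

lemma sumP: "(\<Sum>u\<in>N. P v u) = 1"
proof -
  have "(\<Sum>u\<in>V. P v u) = (\<Sum>u\<in>N. P v u)"
    using nonneg by (intro sum.mono_neutral_right[OF fin NV]) (auto simp: nbr_def order.order_iff_strict)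
  thus ?thesis using stoch by simp
qed

lemma sumc: "(\<Sum>u\<in>N. c u i) = real i"
proof -
  have "(\<Sum>u\<in>N. Icount \<sigma> v u 0 i) = i" using Icount_sum[of N \<sigma> v 0 i] finN inN by simp
  thus ?thesis by (metis of_nat_sum)
qed

lemma c_Suc: "c u (Suc i) = c u i + (if \<sigma> v i = u then 1 else 0)"
  by (simp add: Icount_Suc)

lemma c_notN: "u \<notin> N \<Longrightarrow> c u i = 0"
proof -
  assume "u \<notin> N"
  hence "{j \<in> {0..<i}. \<sigma> v j = u} = {}" using inN by force
  thus ?thesis unfolding Icount_def by simp
qed

end


context row begin

lemma srt_upper:
  assumes srt: "\<And>i. \<sigma> v i \<in> srt_T V P \<sigma> v i" and uN: "u \<in> N"
  shows "c u z - real z * P v u < 1"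
proof (induction z)
  case 0 thus ?case by (simp add: Icount_def)
next
  case (Suc z)
  show ?case
  proof (cases "\<sigma> v z = u")
    case True
    have "c u z - real (z + 1) * P v u < 0" using srt[of z] True unfolding srt_T_def by auto
    thus ?thesis using True by (simp add: c_Suc)
  next
    case False
    have "P v u \<ge> 0" using Npos[OF uN] by simp
    thus ?thesis using Suc False by (simp add: c_Suc algebra_simps)
  qed
qed

lemma srt_lower:
  assumes srt: "\<And>i. \<sigma> v i \<in> srt_T V P \<sigma> v i \<and>
        (\<forall>u\<in>srt_T V P \<sigma> v i.
           (c (\<sigma> v i) i + 1) / P v (\<sigma> v i) \<le> (c u i + 1) / P v u)"
    and uN: "u \<in> N"
  shows "c u z - real z * P v u > -1"
proof (rule ccontr)
  assume "\<not> ?thesis"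
  hence viol: "c u z + 1 \<le> real z * P v u" by simp
  define urg where "urg i \<longleftrightarrow> (c (\<sigma> v i) i + 1) / P v (\<sigma> v i) \<le> real z" for i
  define s where "s = (if \<exists>i<z. \<not> urg i then Suc (GREATEST i. i < z \<and> \<not> urg i) else 0)"
  have sz: "s \<le> z" and win: "\<And>i. s \<le> i \<Longrightarrow> i < z \<Longrightarrow> urg i"
    and start: "s > 0 \<Longrightarrow> \<not> urg (s - 1) \<and> s - 1 < z"
  proof -
    show "s \<le> z"
    proof (cases "\<exists>i<z. \<not> urg i")
      case True
      then obtain k where k: "k < z \<and> \<not> urg k" by blast
      have "(GREATEST i. i < z \<and> \<not> urg i) < z"
        using GreatestI_nat[of "\<lambda>i. i < z \<and> \<not> urg i" k z] k by auto
      thus ?thesis using True by (simp add: s_def)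
    qed (auto simp: s_def)
    show "urg i" if "s \<le> i" "i < z" for i
    proof (rule ccontr)
      assume nu: "\<not> urg i"
      hence ex: "\<exists>i<z. \<not> urg i" using that by blast
      have "i \<le> (GREATEST i. i < z \<and> \<not> urg i)"
        using Greatest_le_nat[of "\<lambda>i. i < z \<and> \<not> urg i" i z] nu that by auto
      thus False using that ex by (simp add: s_def)
    qed
    show "\<not> urg (s - 1) \<and> s - 1 < z" if "s > 0"
    proof -
      have ex: "\<exists>i<z. \<not> urg i" using that by (auto simp: s_def split: if_splits)
      then obtain k where k: "k < z \<and> \<not> urg k" by blast
      have "(GREATEST i. i < z \<and> \<not> urg i) < z \<and> \<not> urg (GREATEST i. i < z \<and> \<not> urg i)"
        using GreatestI_nat[of "\<lambda>i. i < z \<and> \<not> urg i" k z] k by auto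
      thus ?thesis using ex by (simp add: s_def)
    qed
  qed
  have cmono: "c w a \<le> c w b" if "a \<le> b" for w a b using Icount_mono[OF that] by simp
  \<comment> \<open>either enough already sent, or all remaining jobs of w have deadline beyond z\<close>
  have AB: "c w s \<ge> real s * P v w \<or> c w s + 1 > real z * P v w" if wN: "w \<in> N" for w
  proof (cases "s = 0")
    case True thus ?thesis by simp
  next
    case False
    let ?t = "s - 1"
    have st: "s = Suc ?t" using False by simp
    have nu: "\<not> urg ?t" using start False by simp
    show ?thesis
    proof (cases "w \<in> srt_T V P \<sigma> v ?t")
      case True
      have "(c (\<sigma> v ?t) ?t + 1) / P v (\<sigma> v ?t) \<le> (c w ?t + 1) / P v w" using srt[of ?t] True by blast
      hence "real z < (c w ?t + 1) / P v w" using nu unfolding urg_def by simp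
      hence "real z * P v w < c w ?t + 1" using Npos[OF wN] by (simp add: field_simps)
      moreover have "c w ?t \<le> c w s" by (rule cmono) simp
      ultimately show ?thesis by simp
    next
      case False
      hence "c w ?t - real (?t + 1) * P v w \<ge> 0" using wN unfolding srt_T_def by auto
      moreover have "c w ?t \<le> c w s" by (rule cmono) simp
      ultimately show ?thesis using st by simp
    qed
  qed
  have tail: "Icount \<sigma> v w 0 i \<le> Icount \<sigma> v w 0 s \<or> c w i \<le> real z * P v w"
    if "s \<le> i" "i \<le> z" "w \<in> N" for w i
    using that(1,2)
  proof (induction i rule: dec_induct)
    case base thus ?case by simp
  next
    case (step i)
    show ?case
    proof (cases "\<sigma> v i = w")
      case True
      have "urg i" using win step by simp
      hence "c w i + 1 \<le> real z * P v w" using True Npos[OF that(3)] unfolding urg_def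
        by (simp add: field_simps)
      thus ?thesis using True by (simp add: c_Suc)
    next
      case False
      thus ?thesis using step by (simp add: Icount_Suc)
    qed
  qed
  have cnt: "c w z - c w s \<le> real (z - s) * P v w" if wN: "w \<in> N" for w
  proof -
    have pw: "P v w > 0" using Npos[OF wN] .
    have le: "Icount \<sigma> v w 0 s \<le> Icount \<sigma> v w 0 z" using Icount_mono[OF sz] .
    have zs: "real (z - s) = real z - real s" using sz by simp
    from tail[OF sz order.refl wN] show ?thesis
    proof
      assume "Icount \<sigma> v w 0 z \<le> Icount \<sigma> v w 0 s"
      hence "c w z - c w s \<le> 0" by simp
      moreover have "real (z - s) * P v w \<ge> 0" using pw by simp
      ultimately show ?thesis by linarith
    next
      assume cz: "c w z \<le> real z * P v w"
      from AB[OF wN] show ?thesis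
      proof
        assume "c w s \<ge> real s * P v w"
        thus ?thesis using cz zs by (simp add: algebra_simps)
      next
        assume "c w s + 1 > real z * P v w"
        hence "Icount \<sigma> v w 0 z < Icount \<sigma> v w 0 s + 1" using cz by linarith
        hence "Icount \<sigma> v w 0 z = Icount \<sigma> v w 0 s" using le by simp
        hence "c w z - c w s = 0" by simp
        moreover have "real (z - s) * P v w \<ge> 0" using pw by simp
        ultimately show ?thesis by linarith
      qed
    qed
  qed
  have cntu: "c u z - c u s \<le> real (z - s) * P v u - 1"
  proof -
    have zs: "real (z - s) = real z - real s" using sz by simp
    have le: "c u s \<le> c u z" using cmono[OF sz] .
    from AB[OF uN] show ?thesis
    proof
      assume "c u s \<ge> real s * P v u"
      thus ?thesis using viol zs by (simp add: algebra_simps)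
    next
      assume "c u s + 1 > real z * P v u"
      thus ?thesis using viol le by simp
    qed
  qed
  have "real z - real s = (\<Sum>w\<in>N. c w z - c w s)" by (simp add: sum_subtractf sumc)
  also have "\<dots> = (c u z - c u s) + (\<Sum>w\<in>N - {u}. c w z - c w s)"
    using finN uN by (simp add: sum.remove)
  also have "\<dots> \<le> (real (z - s) * P v u - 1) + (\<Sum>w\<in>N - {u}. real (z - s) * P v w)"
    using cntu cnt by (intro add_mono sum_mono) auto
  also have "\<dots> = (\<Sum>w\<in>N. real (z - s) * P v w) - 1"
    using finN uN by (simp add: sum.remove)
  also have "\<dots> = real z - real s - 1" using sz by (simp add: sum_distrib_left[symmetric] sumP)
  finally show False by simp
qed

end


context row begin

lemma billiard_disc:
  assumes bil: "\<And>i. \<forall>u\<in>N. (c (\<sigma> v i) i + 1) / P v (\<sigma> v i) \<le> (c u i + 1) / P v u"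
    and uN: "u \<in> N"
  shows "\<bar>c u z - real z * P v u\<bar> \<le> 1 + real (card N) * P v u"
proof -
  define m where "m i = (c (\<sigma> v i) i + 1) / P v (\<sigma> v i)" for i
  have pos: "P v w > 0" if "w \<in> N" for w using Npos[OF that] .
  have minm: "m i * P v w \<le> c w i + 1" if "w \<in> N" for w i
  proof -
    have "m i \<le> (c w i + 1) / P v w" using bil[of i] that unfolding m_def by blast
    hence "m i * P v w \<le> (c w i + 1) / P v w * P v w" using pos[OF that] by (intro mult_right_mono) auto
    thus ?thesis using pos[OF that] by simp
  qed
  have cmono: "c w i \<le> c w (Suc i)" for w i by (simp add: c_Suc)
  have mmono: "m i \<le> m (Suc i)" for i
  proof -
    let ?w = "\<sigma> v (Suc i)"
    have wN: "?w \<in> N" by (rule inN)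
    have "m i \<le> (c ?w i + 1) / P v ?w" using bil[of i] wN unfolding m_def by blast
    also have "\<dots> \<le> (c ?w (Suc i) + 1) / P v ?w"
      using pos[OF wN] cmono[of ?w i] by (intro divide_right_mono) auto
    finally show ?thesis unfolding m_def by simp
  qed
  have inv: "\<forall>w\<in>N. c w i \<le> m i * P v w" for i
  proof (induction i)
    case 0
    have "m 0 > 0" unfolding m_def using pos[OF inN[of 0]] by (simp add: Icount_def)
    thus ?case using pos by (simp add: Icount_def less_imp_le)
  next
    case (Suc i)
    show ?case
    proof
      fix w assume wN: "w \<in> N"
      have mw: "m i * P v w \<le> m (Suc i) * P v w" using mmono[of i] pos[OF wN] by (simp add: mult_right_mono)
      show "c w (Suc i) \<le> m (Suc i) * P v w"
      proof (cases "\<sigma> v i = w")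
        case True
        hence "c w (Suc i) = m i * P v w" using pos[OF wN] unfolding m_def by (simp add: c_Suc)
        thus ?thesis using mw by simp
      next
        case False
        hence "c w (Suc i) = c w i" by (simp add: c_Suc)
        moreover have "c w i \<le> m i * P v w" using Suc wN by blast
        ultimately show ?thesis using mw by linarith
      qed
    qed
  qed
  have s1: "real z \<le> m z"
  proof -
    have "real z = (\<Sum>w\<in>N. c w z)" by (simp add: sumc)
    also have "\<dots> \<le> (\<Sum>w\<in>N. m z * P v w)" using inv by (intro sum_mono) auto
    also have "\<dots> = m z" by (simp add: sum_distrib_left[symmetric] sumP)
    finally show ?thesis .
  qed
  have s2: "m z - real (card N) \<le> real z"
  proof -
    have "m z - real (card N) = (\<Sum>w\<in>N. m z * P v w - 1)"
      by (simp add: sum_subtractf sum_distrib_left[symmetric] sumP)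
    also have "\<dots> \<le> (\<Sum>w\<in>N. c w z)" using minm by (intro sum_mono) (auto simp: algebra_simps)
    also have "\<dots> = real z" by (simp add: sumc)
    finally show ?thesis .
  qed
  have a1: "\<bar>c u z - m z * P v u\<bar> \<le> 1" using inv[of z] minm[OF uN, of z] uN by auto
  have a2: "\<bar>(m z - real z) * P v u\<bar> \<le> real (card N) * P v u"
    using s1 s2 pos[OF uN] by (simp add: abs_mult mult_right_mono)
  have "c u z - real z * P v u = (c u z - m z * P v u) + (m z - real z) * P v u"
    by (simp add: algebra_simps)
  thus ?thesis using a1 a2 by linarith
qed

end


definition Sx where "Sx V \<sigma> \<chi>0 t = snd (router_state V \<sigma> \<chi>0 t)"

lemma rs_chi_Suc: "chi V \<sigma> \<chi>0 (Suc t) u = (\<Sum>v\<in>V. Icount \<sigma> v u (Sx V \<sigma> \<chi>0 t v) (Sx V \<sigma> \<chi>0 t v + chi V \<sigma> \<chi>0 t v))"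
  unfolding chi_def Sx_def by (simp add: split_def Let_def)

lemma rs_S_Suc: "Sx V \<sigma> \<chi>0 (Suc t) v = Sx V \<sigma> \<chi>0 t v + chi V \<sigma> \<chi>0 t v"
  unfolding chi_def Sx_def by (simp add: split_def Let_def)

lemma rs_0: "chi V \<sigma> \<chi>0 0 = \<chi>0" "Sx V \<sigma> \<chi>0 0 = (\<lambda>_. 0)"
  unfolding chi_def Sx_def by simp_all

lemma abel:
  fixes d g :: "nat \<Rightarrow> real"
  shows "(\<Sum>t<T. (d (Suc t) - d t) * g t) = d T * g T - d 0 * g 0 - (\<Sum>t<T. d (Suc t) * (g (Suc t) - g t))"
  by (induction T) (auto simp: algebra_simps)

lemma abel_bound:
  fixes d q :: "nat \<Rightarrow> real"
  assumes d0: "d 0 = 0" and B: "\<And>t. \<bar>d t\<bar> \<le> B"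
  shows "\<bar>\<Sum>t<T. (d (Suc t) - d t) * q (T - Suc t)\<bar> \<le> B * (\<bar>q 0\<bar> + (\<Sum>k<T. \<bar>q k - q (k - 1)\<bar>))"
proof -
  define g where "g t = q (T - Suc t)" for t
  have e1: "(\<Sum>t<T. (d (Suc t) - d t) * q (T - Suc t)) = d T * q 0 - (\<Sum>t<T. d (Suc t) * (g (Suc t) - g t))"
    using abel[of d g T] d0 unfolding g_def by simp
  have e2: "\<bar>\<Sum>t<T. d (Suc t) * (g (Suc t) - g t)\<bar> \<le> (\<Sum>t<T. B * \<bar>g (Suc t) - g t\<bar>)"
  proof (rule order.trans[OF sum_abs], rule sum_mono)
    fix t
    show "\<bar>d (Suc t) * (g (Suc t) - g t)\<bar> \<le> B * \<bar>g (Suc t) - g t\<bar>"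
      unfolding abs_mult by (rule mult_right_mono[OF B]) simp
  qed
  have e3: "(\<Sum>t<T. \<bar>g (Suc t) - g t\<bar>) = (\<Sum>k<T. \<bar>q k - q (k - 1)\<bar>)"
  proof -
    have "(\<Sum>t<T. \<bar>g (Suc t) - g t\<bar>) = (\<Sum>t<T. (\<lambda>k. \<bar>q k - q (k - 1)\<bar>) (T - Suc t))"
    proof (rule sum.cong[OF refl])
      fix t assume "t \<in> {..<T}"
      have "T - Suc t - 1 = T - Suc (Suc t)" by simp
      hence "(\<lambda>k. \<bar>q k - q (k - 1)\<bar>) (T - Suc t) = \<bar>q (T - Suc t) - q (T - Suc (Suc t))\<bar>" by simp
      also have "\<dots> = \<bar>g (Suc t) - g t\<bar>" unfolding g_def by (rule abs_minus_commute)
      finally show "\<bar>g (Suc t) - g t\<bar> = (\<lambda>k. \<bar>q k - q (k - 1)\<bar>) (T - Suc t)" by simp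
    qed
    also have "\<dots> = (\<Sum>k<T. \<bar>q k - q (k - 1)\<bar>)" by (rule sum.nat_diff_reindex)
    finally show ?thesis .
  qed
  have e4: "\<bar>d T * q 0\<bar> \<le> B * \<bar>q 0\<bar>" unfolding abs_mult by (rule mult_right_mono[OF B]) simp
  have "\<bar>\<Sum>t<T. (d (Suc t) - d t) * q (T - Suc t)\<bar> \<le> \<bar>d T * q 0\<bar> + \<bar>\<Sum>t<T. d (Suc t) * (g (Suc t) - g t)\<bar>"
    unfolding e1 by (rule abs_triangle_ineq4)
  also have "\<dots> \<le> B * \<bar>q 0\<bar> + B * (\<Sum>k<T. \<bar>q k - q (k - 1)\<bar>)"
    using e2 e4 unfolding e3[symmetric] sum_distrib_left by linarith
  finally show ?thesis by (simp add: distrib_left)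
qed

context chain begin

definition D where "D \<sigma> v u z = real (Icount \<sigma> v u 0 z) - real z * P v u"

lemma main_identity:
  assumes w: "w \<in> V" and sig: "\<And>v i. v \<in> V \<Longrightarrow> \<sigma> v i \<in> V"
  shows "real (chi V \<sigma> \<chi>0 T w) - mu V P \<chi>0 T w =
    (\<Sum>v\<in>V. \<Sum>u\<in>V. \<Sum>t<T. (D \<sigma> v u (Sx V \<sigma> \<chi>0 (Suc t) v) - D \<sigma> v u (Sx V \<sigma> \<chi>0 t v)) * Q (T - Suc t) u w)"
proof -
  let ?c = "chi V \<sigma> \<chi>0" and ?S = "Sx V \<sigma> \<chi>0"
  define E where "E t = (\<Sum>u\<in>V. real (?c t u) * Q (T - t) u w)" for t
  have ET: "E T = real (?c T w)"
  proof -
    have "E T = (\<Sum>u\<in>V. if u = w then real (?c T w) else 0)" unfolding E_def by (intro sum.cong) auto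
    thus ?thesis using w fin by (simp add: sum.delta')
  qed
  have E0: "E 0 = mu V P \<chi>0 T w" unfolding E_def mu_def by (simp add: rs_0)
  have step: "E (Suc t) - E t = (\<Sum>v\<in>V. \<Sum>u\<in>V. (D \<sigma> v u (?S (Suc t) v) - D \<sigma> v u (?S t v)) * Q (T - Suc t) u w)"
    if tT: "t < T" for t
  proof -
    define k where "k = T - Suc t"
    have Tt: "T - t = Suc k" using tT unfolding k_def by simp
    have Dd: "D \<sigma> v u (?S (Suc t) v) - D \<sigma> v u (?S t v) =
        real (Icount \<sigma> v u (?S t v) (?S t v + ?c t v)) - real (?c t v) * P v u" for v u
    proof -
      have "Icount \<sigma> v u 0 (?S t v + ?c t v) = Icount \<sigma> v u 0 (?S t v) + Icount \<sigma> v u (?S t v) (?S t v + ?c t v)"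
        by (rule Icount_split) simp
      thus ?thesis unfolding D_def rs_S_Suc by (simp add: ring_distribs)
    qed
    have "E (Suc t) = (\<Sum>u\<in>V. (\<Sum>v\<in>V. real (Icount \<sigma> v u (?S t v) (?S t v + ?c t v))) * Q k u w)"
      unfolding E_def k_def by (simp add: rs_chi_Suc)
    also have "\<dots> = (\<Sum>v\<in>V. \<Sum>u\<in>V. real (Icount \<sigma> v u (?S t v) (?S t v + ?c t v)) * Q k u w)"
      by (simp add: sum_distrib_right) (rule sum.swap)
    finally have e1: "E (Suc t) = \<dots>" .
    have "E t = (\<Sum>v\<in>V. real (?c t v) * (\<Sum>u\<in>V. P v u * Q k u w))"
      unfolding E_def Tt using w by (intro sum.cong refl) (simp add: mpow_Suc_left[OF fin] del: mpow.simps)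
    also have "\<dots> = (\<Sum>v\<in>V. \<Sum>u\<in>V. real (?c t v) * P v u * Q k u w)"
      by (simp add: sum_distrib_left mult.assoc)
    finally have e2: "E t = \<dots>" .
    show ?thesis unfolding e1 e2 Dd k_def[symmetric]
      by (simp add: left_diff_distrib sum_subtractf)
  qed
  have "real (?c T w) - mu V P \<chi>0 T w = (\<Sum>t<T. E (Suc t) - E t)"
    using ET E0 by (simp add: sum_lessThan_telescope)
  also have "\<dots> = (\<Sum>t<T. \<Sum>v\<in>V. \<Sum>u\<in>V. (D \<sigma> v u (?S (Suc t) v) - D \<sigma> v u (?S t v)) * Q (T - Suc t) u w)"
    using step by (intro sum.cong) auto
  also have "\<dots> = (\<Sum>v\<in>V. \<Sum>t<T. \<Sum>u\<in>V. (D \<sigma> v u (?S (Suc t) v) - D \<sigma> v u (?S t v)) * Q (T - Suc t) u w)"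
    by (rule sum.swap)
  also have "\<dots> = (\<Sum>v\<in>V. \<Sum>u\<in>V. \<Sum>t<T. (D \<sigma> v u (?S (Suc t) v) - D \<sigma> v u (?S t v)) * Q (T - Suc t) u w)"
    by (intro sum.cong refl sum.swap)
  finally show ?thesis .
qed

end


context chain begin

lemma main_bound:
  assumes w: "w \<in> V" and sig: "\<And>v i. v \<in> V \<Longrightarrow> \<sigma> v i \<in> V"
    and Bd: "\<And>v u z. v \<in> V \<Longrightarrow> u \<in> V \<Longrightarrow> \<bar>D \<sigma> v u z\<bar> \<le> B v u"
    and K: "\<And>u. u \<in> V \<Longrightarrow> (\<Sum>v\<in>V. B v u) \<le> K"
    and h: "\<And>y. y \<in> V \<Longrightarrow> e y m \<le> 1/2" and m: "m \<ge> 1"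
  shows "\<bar>real (chi V \<sigma> \<chi>0 T w) - mu V P \<chi>0 T w\<bar> \<le> K * (3 + 8 * real m)"
proof -
  let ?S = "Sx V \<sigma> \<chi>0"
  define R where "R u = \<bar>Q 0 u w\<bar> + (\<Sum>k<T. \<bar>Q k u w - Q (k - 1) u w\<bar>)" for u
  have Rn: "R u \<ge> 0" for u unfolding R_def by (simp add: sum_nonneg)
  have one: "\<bar>\<Sum>t<T. (D \<sigma> v u (?S (Suc t) v) - D \<sigma> v u (?S t v)) * Q (T - Suc t) u w\<bar> \<le> B v u * R u"
    if "v \<in> V" "u \<in> V" for v u
    unfolding R_def
  proof (rule abel_bound[where d="\<lambda>t. D \<sigma> v u (?S t v)" and q="\<lambda>k. Q k u w"])
    show "D \<sigma> v u (?S 0 v) = 0" by (simp add: rs_0 D_def Icount_def)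
    show "\<bar>D \<sigma> v u (?S t v)\<bar> \<le> B v u" for t by (rule Bd[OF that])
  qed
  have "\<bar>real (chi V \<sigma> \<chi>0 T w) - mu V P \<chi>0 T w\<bar> =
     \<bar>\<Sum>v\<in>V. \<Sum>u\<in>V. \<Sum>t<T. (D \<sigma> v u (?S (Suc t) v) - D \<sigma> v u (?S t v)) * Q (T - Suc t) u w\<bar>"
    by (simp only: main_identity[OF w sig])
  also have "\<dots> \<le> (\<Sum>v\<in>V. \<Sum>u\<in>V. B v u * R u)"
    by (rule order.trans[OF sum_abs], rule sum_mono, rule order.trans[OF sum_abs], rule sum_mono)
       (rule one; simp)
  also have "\<dots> = (\<Sum>u\<in>V. (\<Sum>v\<in>V. B v u) * R u)"
    by (subst sum.swap) (simp add: sum_distrib_right)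
  also have "\<dots> \<le> (\<Sum>u\<in>V. K * R u)"
    by (intro sum_mono mult_right_mono K Rn)
  also have "\<dots> = K * (\<Sum>u\<in>V. R u)" by (simp add: sum_distrib_left)
  also have "(\<Sum>u\<in>V. R u) \<le> 3 + 8 * real m"
  proof -
    have r0: "(\<Sum>u\<in>V. \<bar>Q 0 u w\<bar>) = 1"
    proof -
      have "(\<Sum>u\<in>V. \<bar>Q 0 u w\<bar>) = (\<Sum>u\<in>V. if u = w then 1 else 0)" by (intro sum.cong) auto
      thus ?thesis using w fin by (simp add: sum.delta')
    qed
    have r1: "(\<Sum>u\<in>V. \<bar>Q k u w - Q (k - 1) u w\<bar>) \<le> e w k + e w (k - 1)" for k
    proof -
      have "(\<Sum>u\<in>V. \<bar>Q k u w - Q (k - 1) u w\<bar>) = (\<Sum>u\<in>V. \<bar>Q k w u - Q (k - 1) w u\<bar>)"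
        using w by (intro sum.cong refl) (simp add: Q_symm[of _ w])
      also have "\<dots> \<le> (\<Sum>u\<in>V. \<bar>Q k w u - pi0\<bar> + \<bar>Q (k - 1) w u - pi0\<bar>)"
        by (intro sum_mono) linarith
      also have "\<dots> = e w k + e w (k - 1)" unfolding e_def l1_def by (simp add: sum.distrib)
      finally show ?thesis .
    qed
    have s1: "(\<Sum>k<T. e w k) \<le> 4 * real m" by (rule sum_e[OF w h m])
    have s2: "(\<Sum>k<T. e w (k - 1)) \<le> 2 + 4 * real m"
    proof -
      have "(\<Sum>k<T. e w (k - 1)) \<le> (\<Sum>k<Suc T. e w (k - 1))"
        by (intro sum_mono2) (auto simp: e_nonneg)
      also have "\<dots> = e w 0 + (\<Sum>k<T. e w k)" by (simp only: sum.lessThan_Suc_shift) simp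
      finally show ?thesis using e0[OF w] s1 by simp
    qed
    have "(\<Sum>u\<in>V. R u) = (\<Sum>u\<in>V. \<bar>Q 0 u w\<bar>) + (\<Sum>k<T. \<Sum>u\<in>V. \<bar>Q k u w - Q (k - 1) u w\<bar>)"
      unfolding R_def by (simp add: sum.distrib) (rule sum.swap)
    also have "\<dots> \<le> 1 + (\<Sum>k<T. e w k + e w (k - 1))"
      unfolding r0 by (intro add_mono sum_mono r1) simp
    also have "\<dots> \<le> 3 + 8 * real m" using s1 s2 by (simp add: sum.distrib)
    finally show ?thesis .
  qed
  hence "K * (\<Sum>u\<in>V. R u) \<le> K * (3 + 8 * real m)"
  proof (rule mult_left_mono)
    have "0 \<le> (\<Sum>v\<in>V. B v w)" using Bd w by (intro sum_nonneg) (meson abs_ge_zero order.trans)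
    thus "0 \<le> K" using K[OF w] by simp
  qed
  finally show ?thesis .
qed

end


locale kna =
  fixes n :: nat and a :: "nat \<Rightarrow> nat" and b :: nat
  assumes n1: "n \<ge> 1"
begin

abbreviation V where "V \<equiv> kna_space n a b"
abbreviation KN where "KN \<equiv> kna_nbr n a b"
abbreviation PP where "PP \<equiv> P_kna n a b"

lemma finV: "finite V"
proof -
  have "V \<subseteq> {xs. set xs \<subseteq> {0,1} \<and> length xs = n}" unfolding kna_space_def by auto
  moreover have "finite {xs. set xs \<subseteq> {0::nat,1} \<and> length xs = n}" by (rule finite_lists_length_eq) simp
  ultimately show ?thesis by (rule finite_subset)
qed

lemma KN_V: "KN x \<subseteq> V" unfolding kna_nbr_def by auto

lemma entry01: "x \<in> V \<Longrightarrow> i < n \<Longrightarrow> x ! i = 0 \<or> x ! i = 1"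
  unfolding kna_space_def using nth_mem by fastforce

lemma not_self: "x \<notin> KN x" unfolding kna_nbr_def by simp

lemma KN_sym: "y \<in> KN x \<Longrightarrow> x \<in> V \<Longrightarrow> x \<in> KN y"
proof -
  assume y: "y \<in> KN x" and x: "x \<in> V"
  have "(\<Sum>i<n. \<bar>real (y ! i) - real (x ! i)\<bar>) = (\<Sum>i<n. \<bar>real (x ! i) - real (y ! i)\<bar>)"
    by (intro sum.cong refl abs_minus_commute)
  thus ?thesis using y x unfolding kna_nbr_def by simp
qed

lemma KN_flip:
  assumes x: "x \<in> V" and y: "y \<in> KN x"
  shows "\<exists>i<n. y = x[i := 1 - x ! i]"
proof -
  have yV: "y \<in> V" using y KN_V by auto
  define t where "t i = \<bar>real (x ! i) - real (y ! i)\<bar>" for i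
  have t01: "t i = 0 \<or> t i = 1" if "i < n" for i
    using entry01[OF x that] entry01[OF yV that] unfolding t_def by auto
  have st: "(\<Sum>i<n. t i) = 1" using y unfolding kna_nbr_def t_def by simp
  obtain i where i: "i < n" "t i \<noteq> 0"
  proof (rule ccontr)
    assume "\<not> thesis"
    hence "\<forall>i<n. t i = 0" using that by blast
    hence "(\<Sum>i<n. t i) = 0" by simp
    thus False using st by simp
  qed
  have others: "t j = 0" if "j < n" "j \<noteq> i" for j
  proof (rule ccontr)
    assume "t j \<noteq> 0"
    hence "t j = 1" "t i = 1" using t01 that i by auto
    moreover have "t i + t j \<le> (\<Sum>k<n. t k)"
    proof -
      have "(\<Sum>k\<in>{i,j}. t k) \<le> (\<Sum>k<n. t k)"
        using i that by (intro sum_mono2) (auto simp: t_def)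
      thus ?thesis using that by simp
    qed
    ultimately show False using st by simp
  qed
  have "y = x[i := 1 - x ! i]"
  proof (rule nth_equalityI)
    show "length y = length (x[i := 1 - x ! i])" using x yV unfolding kna_space_def by simp
    fix j assume "j < length y"
    hence jn: "j < n" using yV unfolding kna_space_def by simp
    have lx: "length x = n" using x unfolding kna_space_def by simp
    show "y ! j = x[i := 1 - x ! i] ! j"
    proof (cases "j = i")
      case True
      thus ?thesis using i entry01[OF x jn] entry01[OF yV jn] lx unfolding t_def by auto
    next
      case False
      thus ?thesis using others[OF jn False] lx unfolding t_def by simp
    qed
  qed
  thus ?thesis using i by blast
qed

lemma card_KN: assumes x: "x \<in> V" shows "card (KN x) \<le> n"
proof -
  have "KN x \<subseteq> (\<lambda>i. x[i := 1 - x ! i]) ` {..<n}" using KN_flip[OF x] by blast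
  hence "card (KN x) \<le> card ((\<lambda>i. x[i := 1 - x ! i]) ` {..<n})" by (intro card_mono) auto
  also have "\<dots> \<le> n" using card_image_le[of "{..<n}"] by simp
  finally show ?thesis .
qed

lemma P_off: "u \<noteq> x \<Longrightarrow> PP x u = (if u \<in> KN x then 1 / (2 * real n) else 0)"
  unfolding P_kna_def by simp

lemma P_diag: "PP x x = 1 - real (card (KN x)) / (2 * real n)"
  unfolding P_kna_def using not_self by simp

lemma P_diag_ge: "x \<in> V \<Longrightarrow> PP x x \<ge> 1/2"
proof -
  assume x: "x \<in> V"
  have "real (card (KN x)) \<le> real n" using card_KN[OF x] by simp
  hence "real (card (KN x)) / (2 * real n) \<le> 1/2" using n1 by (simp add: field_simps)
  thus ?thesis by (simp add: P_diag)
qed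

lemma P_diag_le: "PP x x \<le> 1" by (simp add: P_diag)

lemma P_nonneg: "x \<in> V \<Longrightarrow> PP x u \<ge> 0"
  using P_diag_ge[of x] by (cases "u = x") (auto simp: P_off)

lemma P_stoch: assumes x: "x \<in> V" shows "(\<Sum>u\<in>V. PP x u) = 1"
proof -
  have "(\<Sum>u\<in>V. PP x u) = (\<Sum>u\<in>V. (if u \<in> KN x then 1 / (2 * real n) else 0) + (if u = x then PP x x else 0))"
    by (intro sum.cong refl) (auto simp: P_off not_self)
  also have "\<dots> = (\<Sum>u\<in>V \<inter> KN x. 1 / (2 * real n)) + PP x x"
    using finV x by (simp add: sum.distrib sum.inter_restrict[symmetric] sum.delta')
  also have "V \<inter> KN x = KN x" using KN_V by auto
  finally show ?thesis using n1 by (simp add: P_diag)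
qed

lemma P_symm: assumes "x \<in> V" "y \<in> V" shows "PP x y = PP y x"
proof (cases "x = y")
  case False
  have "y \<in> KN x \<longleftrightarrow> x \<in> KN y" using KN_sym assms by blast
  thus ?thesis using False by (simp add: P_off)
qed simp

lemma nbr_sub: "nbr V PP x \<subseteq> insert x (KN x)"
proof
  fix u assume u: "u \<in> nbr V PP x"
  show "u \<in> insert x (KN x)"
  proof (cases "u = x")
    case False
    thus ?thesis using u unfolding nbr_def by (auto simp: P_off split: if_splits)
  qed simp
qed

lemma card_nbr: assumes "x \<in> V" shows "card (nbr V PP x) \<le> n + 1"
proof -
  have "card (nbr V PP x) \<le> card (insert x (KN x))"
    using finV KN_V finite_subset[OF KN_V finV] by (intro card_mono nbr_sub) auto
  also have "\<dots> \<le> Suc (card (KN x))" by (rule card_insert_le_m1) simp_all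
  finally show ?thesis using card_KN[OF assms] by simp
qed

end


context kna begin

definition z0 where "z0 = replicate n (0::nat)"
definition ones where "ones y = (\<Sum>i<n. y ! i)"

lemma z0V: "z0 \<in> V" unfolding z0_def kna_space_def by auto

lemma ones0: assumes "y \<in> V" "ones y = 0" shows "y = z0"
proof (rule nth_equalityI)
  show "length y = length z0" using assms unfolding kna_space_def z0_def by simp
  fix i assume "i < length y"
  hence i: "i < n" using assms unfolding kna_space_def by simp
  have "y ! i = 0" using assms(2) i unfolding ones_def by simp
  thus "y ! i = z0 ! i" using i unfolding z0_def by simp
qed

lemma drop_one:
  assumes y: "y \<in> V" and i: "i < n" "y ! i = 1"
  shows "y[i := 0] \<in> V" "y[i := 0] \<in> KN y" "ones (y[i := 0]) = ones y - 1"
proof -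
  let ?y = "y[i := 0]"
  have ly: "length y = n" using y unfolding kna_space_def by simp
  have le: "?y ! j \<le> y ! j" for j using ly i(1) by (cases "j = i") (auto simp: nth_list_update)
  have sety: "set ?y \<subseteq> {0,1}" using y unfolding kna_space_def
    by (auto dest!: subsetD[OF set_update_subset_insert])
  have "(\<Sum>j<n. a j * ?y ! j) \<le> (\<Sum>j<n. a j * y ! j)" by (intro sum_mono mult_left_mono le) simp
  thus yV: "?y \<in> V" using y sety ly unfolding kna_space_def by auto
  have "(\<Sum>j<n. \<bar>real (y ! j) - real (?y ! j)\<bar>) = (\<Sum>j<n. if j = i then 1 else 0)"
    using i ly by (intro sum.cong refl) (auto simp: nth_list_update)
  also have "\<dots> = 1" using i by simp
  finally show "?y \<in> KN y" using yV unfolding kna_nbr_def by simp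
  have "(\<Sum>j<n. y ! j) = (\<Sum>j<n. ?y ! j + (if j = i then 1 else 0))"
    using i ly by (intro sum.cong refl) (auto simp: nth_list_update)
  also have "\<dots> = (\<Sum>j<n. ?y ! j) + 1" using i by (simp add: sum.distrib)
  finally show "ones ?y = ones y - 1" unfolding ones_def by simp
qed

lemma mpow_nn: "x \<in> V \<Longrightarrow> 0 \<le> mpow V PP k x u"
proof (induction k arbitrary: u)
  case 0 show ?case by simp
next
  case (Suc k) show ?case using P_nonneg Suc by (auto intro!: sum_nonneg mult_nonneg_nonneg)
qed

lemma mpow_lb:
  assumes "y \<in> V" "ones y \<le> k"
  shows "mpow V PP k y z0 \<ge> (1 / (2 * real n)) ^ k"
  using assms
proof (induction k arbitrary: y)
  case 0
  hence "y = z0" using ones0 by simp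
  thus ?case by simp
next
  case (Suc k)
  have sum_ge: "mpow V PP (Suc k) y z0 \<ge> PP y w * mpow V PP k w z0" if wV: "w \<in> V" for w
  proof -
    have nn: "\<And>x. x \<in> V \<Longrightarrow> 0 \<le> PP y x * mpow V PP k x z0"
    proof -
      fix x assume xV: "x \<in> V"
      have "0 \<le> mpow V PP k x z0"
        by (rule mpow_nn[OF xV])
      thus "0 \<le> PP y x * mpow V PP k x z0" using P_nonneg[OF Suc.prems(1)] by simp
    qed
    have "PP y w * mpow V PP k w z0 \<le> (\<Sum>x\<in>V. PP y x * mpow V PP k x z0)"
      using finV wV nn by (intro member_le_sum) auto
    thus ?thesis using mpow_Suc_left[OF finV Suc.prems(1) z0V] by simp
  qed
  have q: "1 / (2 * real n) \<le> (1::real)" using n1 by simp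
  have q0: "0 \<le> 1 / (2 * real n)" by simp
  show ?case
  proof (cases "ones y = 0")
    case True
    hence yz: "y = z0" using ones0 Suc.prems by simp
    have "(1 / (2 * real n)) ^ Suc k \<le> PP z0 z0 * (1 / (2 * real n)) ^ k"
    proof -
      have "1 / (2 * real n) \<le> 1/2" using n1 by (simp add: field_simps)
      hence "1 / (2 * real n) \<le> PP z0 z0" using P_diag_ge[OF z0V] by linarith
      hence "1 / (2 * real n) * (1 / (2 * real n)) ^ k \<le> PP z0 z0 * (1 / (2 * real n)) ^ k"
        by (rule mult_right_mono) simp
      thus ?thesis by (simp only: power_Suc)
    qed
    also have "\<dots> \<le> PP z0 z0 * mpow V PP k z0 z0"
      using Suc.IH[OF z0V] yz True P_nonneg[OF z0V] by (intro mult_left_mono) auto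
    also have "\<dots> \<le> mpow V PP (Suc k) y z0" using sum_ge[OF z0V] yz by simp
    finally show ?thesis .
  next
    case False
    have "\<exists>i<n. y ! i \<noteq> 0"
    proof (rule ccontr)
      assume "\<not> ?thesis"
      hence "ones y = 0" unfolding ones_def by simp
      thus False using False by simp
    qed
    then obtain i where i: "i < n" "y ! i \<noteq> 0" by blast
    hence i1: "y ! i = 1" using entry01[OF Suc.prems(1) i(1)] by simp
    note d = drop_one[OF Suc.prems(1) i(1) i1]
    have "length y = n" using Suc.prems(1) unfolding kna_space_def by simp
    hence "y[i := 0] ! i = 0" using i(1) by simp
    hence ne: "y[i := 0] \<noteq> y" using i1 by auto
    have Py: "PP y (y[i := 0]) = 1 / (2 * real n)" using d(2) ne by (simp add: P_off)
    have "(1 / (2 * real n)) ^ Suc k = PP y (y[i := 0]) * (1 / (2 * real n)) ^ k" using Py by simp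
    also have "\<dots> \<le> PP y (y[i := 0]) * mpow V PP k (y[i := 0]) z0"
      using Suc.IH[OF d(1)] d(3) Suc.prems(2) Py by (intro mult_left_mono) auto
    also have "\<dots> \<le> mpow V PP (Suc k) y z0" using sum_ge[OF d(1)] by simp
    finally show ?thesis .
  qed
qed

lemma ones_le: "y \<in> V \<Longrightarrow> ones y \<le> n"
proof -
  assume y: "y \<in> V"
  have "ones y \<le> (\<Sum>i<n. 1)" unfolding ones_def using entry01[OF y] by (intro sum_mono) fastforce
  thus ?thesis by simp
qed

end


context kna begin

lemma chainV: "chain V PP"
  by unfold_locales (auto simp: finV P_nonneg P_stoch P_symm)

lemma kna_bound:
  assumes rt: "is_srt_router V PP \<sigma> \<or> is_billiard_router V PP \<sigma>"
    and w: "w \<in> V"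
  shows "\<bar>real (chi V \<sigma> \<chi>0 T w) - mu V PP \<chi>0 T w\<bar>
     \<le> real (3 * n + 2) * (11 + 8 * real (mixing_time V PP (\<lambda>_. 1 / real (card V)) (1/4)))"
proof -
  interpret chain V PP by (rule chainV)
  have inN: "\<sigma> v i \<in> nbr V PP v" if "v \<in> V" for v i
    using rt that unfolding is_srt_router_def is_billiard_router_def srt_T_def by auto
  have sig: "\<sigma> v i \<in> V" if "v \<in> V" for v i using inN[OF that] unfolding nbr_def by auto
  define B where "B v u = (if u \<in> nbr V PP v then 1 + real (card (nbr V PP v)) * PP v u else 0)" for v u
  have Bd: "\<bar>D \<sigma> v u z\<bar> \<le> B v u" if v: "v \<in> V" and u: "u \<in> V" for v u z
  proof -
    interpret row V PP \<sigma> v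
      by unfold_locales (auto simp: finV v P_nonneg P_stoch inN)
    show ?thesis
    proof (cases "u \<in> N")
      case True
      have B1: "B v u \<ge> 1" unfolding B_def using True Npos[OF True] by simp
      from rt show ?thesis
      proof
        assume srt: "is_srt_router V PP \<sigma>"
        have s: "\<And>i. \<sigma> v i \<in> srt_T V PP \<sigma> v i \<and>
          (\<forall>u\<in>srt_T V PP \<sigma> v i. (c (\<sigma> v i) i + 1) / PP v (\<sigma> v i) \<le> (c u i + 1) / PP v u)"
          using srt v unfolding is_srt_router_def by blast
        have "\<bar>D \<sigma> v u z\<bar> < 1" unfolding D_def
          using srt_upper[OF conjunct1[OF s] True, of z] srt_lower[OF s True, of z] by auto
        thus ?thesis using B1 by simp
      next
        assume bil: "is_billiard_router V PP \<sigma>"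
        have s: "\<And>i. \<forall>u\<in>N. (c (\<sigma> v i) i + 1) / PP v (\<sigma> v i) \<le> (c u i + 1) / PP v u"
          using bil v unfolding is_billiard_router_def by blast
        show ?thesis unfolding D_def B_def using billiard_disc[OF s True, of z] True by simp
      qed
    next
      case False
      have "PP v u = 0" using False u P_nonneg[OF v, of u] unfolding nbr_def by auto
      thus ?thesis using c_notN[OF False] False unfolding D_def B_def by simp
    qed
  qed
  have K: "(\<Sum>v\<in>V. B v u) \<le> real (3 * n + 2)" if u: "u \<in> V" for u
  proof -
    have Buu: "B u u \<le> real n + 2"
    proof -
      have "real (card (nbr V PP u)) * PP u u \<le> real (n + 1) * 1"
        using card_nbr[OF u] P_diag_le[of u] P_nonneg[OF u, of u]
        by (intro mult_mono) auto
      thus ?thesis unfolding B_def by simp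
    qed
    have Bvu: "B v u \<le> (if v \<in> KN u then 2 else 0)" if v: "v \<in> V" "v \<noteq> u" for v
    proof (cases "u \<in> nbr V PP v")
      case True
      hence "u \<in> KN v" using nbr_sub[of v] v by auto
      hence vK: "v \<in> KN u" using KN_sym v by blast
      have "u \<in> KN v" by fact
      hence P: "PP v u = 1 / (2 * real n)" using v by (simp add: P_off)
      have "real (card (nbr V PP v)) * (1 / (2 * real n)) \<le> real (n + 1) * (1 / (2 * real n))"
        using card_nbr[OF v(1)] by (intro mult_right_mono) auto
      also have "\<dots> \<le> 1" using n1 by (simp add: field_simps)
      finally show ?thesis unfolding B_def using True P vK by simp
    next
      case False thus ?thesis unfolding B_def by simp
    qed
    have "(\<Sum>v\<in>V. B v u) = B u u + (\<Sum>v\<in>V - {u}. B v u)"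
      using finV u by (simp add: sum.remove)
    also have "(\<Sum>v\<in>V - {u}. B v u) \<le> (\<Sum>v\<in>V - {u}. if v \<in> KN u then 2 else 0)"
      using Bvu by (intro sum_mono) auto
    also have "\<dots> \<le> (\<Sum>v\<in>V. if v \<in> KN u then 2 else 0)"
      using finV by (intro sum_mono2) auto
    also have "\<dots> = (\<Sum>v\<in>V \<inter> KN u. 2)" by (rule sum.inter_restrict[OF finV, symmetric])
    also have "V \<inter> KN u = KN u" using KN_V by auto
    also have "(\<Sum>v\<in>KN u. (2::real)) \<le> 2 * real n" using card_KN[OF u] by simp
    finally show ?thesis using Buu by simp
  qed
  define tau where "tau = mixing_time V PP (\<lambda>_. pi0) (1/4)"
  have ex: "\<exists>t. e x t \<le> 1/2" if x: "x \<in> V" for x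
  proof (rule doeblin[OF z0V _ _ x])
    show "0 < (1 / (2 * real n)) ^ n" using n1 by simp
    show "(1 / (2 * real n)) ^ n \<le> Q n y z0" if "y \<in> V" for y
      using mpow_lb[OF that ones_le[OF that]] .
  qed
  have h: "e y (tau + 1) \<le> 1/2" if y: "y \<in> V" for y
    using mixing_e[OF ex y] e_mono[OF y, of tau "tau + 1"] unfolding tau_def by simp
  have "\<bar>real (chi V \<sigma> \<chi>0 T w) - mu V PP \<chi>0 T w\<bar> \<le> real (3 * n + 2) * (3 + 8 * real (tau + 1))"
    by (rule main_bound[OF w sig Bd K h]) auto
  thus ?thesis unfolding tau_def pi0_def by (simp add: algebra_simps)
qed

end


theorem theorem6p2:
  assumes MorrisSinclair:
    "\<forall>\<alpha>::real. \<alpha> > 0 \<longrightarrow> (\<exists>C::real. \<forall>(n::nat) (a::nat \<Rightarrow> nat) (b::nat).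
        n \<ge> 1 \<and> (\<forall>i<n. a i > 0) \<and> b > 0 \<longrightarrow>
        real (mixing_time (kna_space n a b) (P_kna n a b)
                (\<lambda>_. 1 / real (card (kna_space n a b))) (1/4))
          \<le> C * real n powr (9/2 + \<alpha>))"
  shows
    "\<forall>\<alpha>::real. \<alpha> > 0 \<longrightarrow> (\<exists>C'::real. \<forall>(n::nat) (a::nat \<Rightarrow> nat) (b::nat)
        (\<sigma>::nat list \<Rightarrow> nat \<Rightarrow> nat list) (\<chi>0::nat list \<Rightarrow> nat).
        n \<ge> 1 \<and> (\<forall>i<n. a i > 0) \<and> b > 0 \<and>
        (is_srt_router (kna_space n a b) (P_kna n a b) \<sigma> \<or>
         is_billiard_router (kna_space n a b) (P_kna n a b) \<sigma>) \<longrightarrow>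
        (\<forall>w\<in>kna_space n a b. \<forall>T::nat.
           \<bar>real (chi (kna_space n a b) \<sigma> \<chi>0 T w) - mu (kna_space n a b) (P_kna n a b) \<chi>0 T w\<bar>
             \<le> C' * real n powr (11/2 + \<alpha>)))"
proof (intro allI impI)
  fix \<alpha> :: real assume \<alpha>: "\<alpha> > 0"
  obtain C where C: "\<forall>(n::nat) (a::nat \<Rightarrow> nat) (b::nat).
        n \<ge> 1 \<and> (\<forall>i<n. a i > 0) \<and> b > 0 \<longrightarrow>
        real (mixing_time (kna_space n a b) (P_kna n a b)
                (\<lambda>_. 1 / real (card (kna_space n a b))) (1/4))
          \<le> C * real n powr (9/2 + \<alpha>)"
    using MorrisSinclair \<alpha> by blast
  show "\<exists>C'::real. \<forall>(n::nat) (a::nat \<Rightarrow> nat) (b::nat)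
        (\<sigma>::nat list \<Rightarrow> nat \<Rightarrow> nat list) (\<chi>0::nat list \<Rightarrow> nat).
        n \<ge> 1 \<and> (\<forall>i<n. a i > 0) \<and> b > 0 \<and>
        (is_srt_router (kna_space n a b) (P_kna n a b) \<sigma> \<or>
         is_billiard_router (kna_space n a b) (P_kna n a b) \<sigma>) \<longrightarrow>
        (\<forall>w\<in>kna_space n a b. \<forall>T::nat.
           \<bar>real (chi (kna_space n a b) \<sigma> \<chi>0 T w) - mu (kna_space n a b) (P_kna n a b) \<chi>0 T w\<bar>
             \<le> C' * real n powr (11/2 + \<alpha>))"
  proof (intro exI[of _ "55 + 40 * \<bar>C\<bar>"] allI impI ballI)
    fix n a b \<sigma> \<chi>0 w T
    assume H: "n \<ge> 1 \<and> (\<forall>i<n. a i > 0) \<and> b > 0 \<and>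
        (is_srt_router (kna_space n a b) (P_kna n a b) \<sigma> \<or>
         is_billiard_router (kna_space n a b) (P_kna n a b) \<sigma>)"
      and w: "w \<in> kna_space n a b"
    interpret kna n a b using H by unfold_locales simp
    define tau where "tau = real (mixing_time (kna_space n a b) (P_kna n a b)
                (\<lambda>_. 1 / real (card (kna_space n a b))) (1/4))"
    have tau: "tau \<le> \<bar>C\<bar> * real n powr (9/2 + \<alpha>)"
    proof -
      have "tau \<le> C * real n powr (9/2 + \<alpha>)" using C H unfolding tau_def by blast
      also have "\<dots> \<le> \<bar>C\<bar> * real n powr (9/2 + \<alpha>)" by (intro mult_right_mono) auto
      finally show ?thesis .
    qed
    have tau0: "tau \<ge> 0" unfolding tau_def by simp
    have bd: "\<bar>real (chi (kna_space n a b) \<sigma> \<chi>0 T w) - mu (kna_space n a b) (P_kna n a b) \<chi>0 T w\<bar>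
        \<le> real (3 * n + 2) * (11 + 8 * tau)"
      unfolding tau_def using kna_bound[of \<sigma> w \<chi>0 T] H w by blast
    have rn: "real n \<ge> 1" using n1 by simp
    let ?p = "real n powr (11/2 + \<alpha>)"
    have p1: "real n \<le> ?p"
    proof -
      have "real n powr 1 \<le> real n powr (11/2 + \<alpha>)" using rn \<alpha> by (intro powr_mono) auto
      thus ?thesis using rn by simp
    qed
    have p2: "real n * real n powr (9/2 + \<alpha>) = ?p"
    proof -
      have "real n * real n powr (9/2 + \<alpha>) = real n powr 1 * real n powr (9/2 + \<alpha>)" using rn by simp
      also have "\<dots> = real n powr (1 + (9/2 + \<alpha>))" by (rule powr_add[symmetric])
      also have "1 + (9/2 + \<alpha>) = 11/2 + \<alpha>" by simp
      finally show ?thesis .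
    qed
    have "real (3 * n + 2) * (11 + 8 * tau) \<le> (5 * real n) * (11 + 8 * (\<bar>C\<bar> * real n powr (9/2 + \<alpha>)))"
      using rn tau tau0 by (intro mult_mono) auto
    also have "\<dots> = 55 * real n + 40 * \<bar>C\<bar> * (real n * real n powr (9/2 + \<alpha>))"
      by (simp add: algebra_simps)
    also have "\<dots> \<le> 55 * ?p + 40 * \<bar>C\<bar> * ?p" unfolding p2 using p1 by simp
    also have "\<dots> = (55 + 40 * \<bar>C\<bar>) * ?p" by (simp add: algebra_simps)
    finally show "\<bar>real (chi (kna_space n a b) \<sigma> \<chi>0 T w) - mu (kna_space n a b) (P_kna n a b) \<chi>0 T w\<bar>
        \<le> (55 + 40 * \<bar>C\<bar>) * ?p" using bd by linarith
  qed
qed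


end
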